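(* Consider the Count-Min Sketch with Conservative Updates (CMS-CU) with $d$ rows and $w$ counters per row, fed with an IRM request stream, as described in the context. For every pair of distinct items $i,j\in I$ there exist constants $\alpha_{i,j}>0$ and $\beta_{i,j}\ge 0$ (not depending on $s$) such that for every row $r\in[d]$ and every time $s\ge 1$, $$\mathbb{E}\big[\delta_{i,j}^r(s)\big]\le \frac{p_j}{w}\Big(\gamma_{i,j}+\beta_{i,j}\,e^{-\alpha_{i,j}(s-1)}\Big),$$ where $$\gamma_{i,j}=\begin{cases}1,& j\le i,\\ \min\big(\mathcal{A}(p_i-p_j)^{d-1},\,1\big),& j>i,\end{cases}$$ with $\mathcal{A}(x)=\min_{k=0,\dots,w-1}\left(\frac{\sum_{l>k}p_l}{(w-k)x}+\frac{k}{w}\right)$ for $x>0$ and $\mathcal{A}(0)=1$.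
   Context: Items form the universe $I=\{1,\dots,N\}$. Requests follow the Independent Reference Model (IRM): the stream is $Z(1),Z(2),\dots$ with $Z(s)$ i.i.d. categorical random variables, $\Pr(Z(s)=i)=p_i$, $\sum_{i\in I}p_i=1$, and items are numbered so that $p_1\ge p_2\ge\dots\ge p_N$. The sketch is a $d\times w$ array of counters, initially $0$. Hash functions $h_1,\dots,h_d:I\to\{1,\dots,w\}$ are chosen independently and uniformly at random from a family of pairwise independent hash functions (so $\Pr(h_r(i)=h_r(j))=1/w$ for $i\ne j$), independently of the request stream, and are fixed during processing. $c_i^r(t)$ denotes the value at time $t$ of the counter in row $r$, column $h_r(i)$. CMS-CU update: when item $i$ is requested at time $t$, $c_i^r(t)=\max\big(c_i^r(t-1),\ \min_{f\in[d]}c_i^f(t-1)+1\big)$ for all $r\in[d]$ (other counters unchanged). $n_i(t)$ is the number of occurrences of item $i$ among $Z(1),\dots,Z(t)$; the estimate is $\hat n_i(t)=\min_{r\in[d]}c_i^r(t)$. For $j\ne i$, $\delta_{i,j}^r(s)=\mathbb{1}\big(Z(s)=j,\ h_r(i)=h_r(j),\ \hat n_j(s-1)=c_i^r(s-1)\big)$ is the contribution of item $j$'s request at time $s$ to counter $h_r(i)$. Expectations are taken over both the random choice of hash functions and the request process. *)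

theory Defs
  imports "HOL-Analysis.Analysis"
begin

text \<open>Items are 1..N, rows are 1..d, columns are 1..w.
  A tuple of hash functions is hs :: row => item => column.
  A counter array is c :: row => column => nat.\<close>

definition cms_est :: "nat \<Rightarrow> (nat \<Rightarrow> nat \<Rightarrow> nat) \<Rightarrow> (nat \<Rightarrow> nat \<Rightarrow> nat) \<Rightarrow> nat \<Rightarrow> nat" where
  "cms_est d hs c i = Min ((\<lambda>f. c f (hs f i)) ` {1..d})"

definition cms_cu_update :: "nat \<Rightarrow> (nat \<Rightarrow> nat \<Rightarrow> nat) \<Rightarrow> (nat \<Rightarrow> nat \<Rightarrow> nat) \<Rightarrow> nat \<Rightarrow> (nat \<Rightarrow> nat \<Rightarrow> nat)" where
  "cms_cu_update d hs c i =
     (\<lambda>r col. if r \<in> {1..d} \<and> col = hs r i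
               then max (c r col) (cms_est d hs c i + 1) else c r col)"

text \<open>Counter array after processing the request list zs (zs ! (k-1) = Z(k)), starting from 0.\<close>
definition cms_state :: "nat \<Rightarrow> (nat \<Rightarrow> nat \<Rightarrow> nat) \<Rightarrow> nat list \<Rightarrow> (nat \<Rightarrow> nat \<Rightarrow> nat)" where
  "cms_state d hs zs = foldl (cms_cu_update d hs) (\<lambda>_ _. 0) zs"

definition cms_delta :: "nat \<Rightarrow> (nat \<Rightarrow> nat \<Rightarrow> nat) \<Rightarrow> nat \<Rightarrow> nat \<Rightarrow> nat \<Rightarrow> nat list \<Rightarrow> bool" where
  "cms_delta d hs i j r zs =
     (let s = length zs; c = cms_state d hs (take (s - 1) zs) in
      zs ! (s - 1) = j \<and> hs r i = hs r j \<and> cms_est d hs c j = c r (hs r i))"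

text \<open>Pairwise independent family of hash functions from {1..N} to {1..w}
  (a hash function is drawn uniformly from the finite set H).\<close>
definition pairwise_indep_family :: "nat \<Rightarrow> nat \<Rightarrow> (nat \<Rightarrow> nat) set \<Rightarrow> bool" where
  "pairwise_indep_family N w H \<longleftrightarrow>
     finite H \<and> H \<noteq> {} \<and> (\<forall>h\<in>H. \<forall>i\<in>{1..N}. h i \<in> {1..w}) \<and>
     (\<forall>i\<in>{1..N}. \<forall>j\<in>{1..N}. i \<noteq> j \<longrightarrow> (\<forall>a\<in>{1..w}. \<forall>b\<in>{1..w}.
        real (card {h\<in>H. h i = a \<and> h j = b}) = real (card H) / (real w)^2))"

text \<open>E[delta^r_{i,j}(s)]: expectation over d independent uniform draws from H
  and over the IRM request sequence Z(1..s).\<close>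
definition exp_delta :: "nat \<Rightarrow> (nat \<Rightarrow> real) \<Rightarrow> nat \<Rightarrow> (nat \<Rightarrow> nat) set \<Rightarrow> nat \<Rightarrow> nat \<Rightarrow> nat \<Rightarrow> nat \<Rightarrow> real" where
  "exp_delta N p d H i j r s =
     (\<Sum>hs\<in>PiE {1..d} (\<lambda>_. H). (1 / real (card H)) ^ d *
        (\<Sum>zs\<in>{zs. set zs \<subseteq> {1..N} \<and> length zs = s}.
           (\<Prod>k<s. p (zs ! k)) * (if cms_delta d hs i j r zs then 1 else 0)))"

definition cmsA :: "nat \<Rightarrow> (nat \<Rightarrow> real) \<Rightarrow> nat \<Rightarrow> real \<Rightarrow> real" where
  "cmsA N p w x = (if x = 0 then 1 else
     Min ((\<lambda>k. (\<Sum>l\<in>{k+1..N}. p l) / (real (w - k) * x) + real k / real w) ` {0..w-1}))"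

definition cms_gamma :: "nat \<Rightarrow> (nat \<Rightarrow> real) \<Rightarrow> nat \<Rightarrow> nat \<Rightarrow> nat \<Rightarrow> nat \<Rightarrow> real" where
  "cms_gamma N p d w i j = (if j \<le> i then 1 else min ((cmsA N p w (p i - p j)) ^ (d - 1)) 1)"

end

theory Submission
  imports Defs
begin

definition LS :: "nat set \<Rightarrow> nat \<Rightarrow> nat list set" where
  "LS A t = {zs. set zs \<subseteq> A \<and> length zs = t}"

lemma LS_finite: "finite A \<Longrightarrow> finite (LS A t)"
  unfolding LS_def by (rule finite_lists_length_eq)

lemma LS_Suc: "LS A (Suc t) = (\<lambda>(zs,a). zs @ [a]) ` (LS A t \<times> A)"
proof (rule set_eqI, rule iffI)
  fix xs assume "xs \<in> LS A (Suc t)"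
  then have "xs = butlast xs @ [last xs]" "set xs \<subseteq> A" "length xs = Suc t"
    by (auto simp: LS_def intro!: append_butlast_last_id[symmetric])
  moreover have "last xs \<in> set xs" using \<open>length xs = Suc t\<close>
    by (metis last_in_set list.size(3) nat.distinct(1))
  moreover have "set (butlast xs) \<subseteq> set xs" by (simp add: in_set_butlastD subsetI)
  ultimately show "xs \<in> (\<lambda>(zs,a). zs @ [a]) ` (LS A t \<times> A)"
    unfolding LS_def by (intro image_eqI[of _ _ "(butlast xs, last xs)"]) auto
qed (auto simp: LS_def)

lemma LS_sum_Suc:
  assumes "finite A"
  shows "(\<Sum>zs\<in>LS A (Suc t). F zs) = (\<Sum>zs\<in>LS A t. \<Sum>a\<in>A. F (zs @ [a]))"
proof -
  have inj: "inj_on (\<lambda>(zs,a). zs @ [a]) (LS A t \<times> A)"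
    by (auto simp: inj_on_def)
  have "(\<Sum>zs\<in>LS A (Suc t). F zs) = (\<Sum>x\<in>LS A t \<times> A. F ((\<lambda>(zs,a). zs @ [a]) x))"
    unfolding LS_Suc by (rule sum.reindex[OF inj, unfolded comp_def])
  also have "\<dots> = (\<Sum>zs\<in>LS A t. \<Sum>a\<in>A. F (zs @ [a]))"
    by (simp add: sum.cartesian_product split_def)
  finally show ?thesis .
qed

lemma prod_nth_snoc: "(\<Prod>k<Suc (length zs). f ((zs @ [a]) ! k)) = (\<Prod>k<length zs. f (zs ! k)) * f a"
  by (simp add: prod.lessThan_Suc nth_append)

lemma LS_sum_prod:
  fixes f :: "nat \<Rightarrow> real"
  assumes "finite A"
  shows "(\<Sum>zs\<in>LS A t. \<Prod>k<t. f (zs ! k)) = (\<Sum>a\<in>A. f a) ^ t"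
proof (induction t)
  case 0
  have "LS A 0 = {[]}" by (auto simp: LS_def)
  then show ?case by simp
next
  case (Suc t)
  have "(\<Sum>zs\<in>LS A (Suc t). \<Prod>k<Suc t. f (zs ! k)) =
      (\<Sum>zs\<in>LS A t. \<Sum>a\<in>A. \<Prod>k<Suc t. f ((zs @ [a]) ! k))"
    by (rule LS_sum_Suc[OF assms])
  also have "\<dots> = (\<Sum>zs\<in>LS A t. \<Sum>a\<in>A. (\<Prod>k<t. f (zs ! k)) * f a)"
    by (intro sum.cong refl) (auto simp: LS_def prod_nth_snoc[of _ _ f, symmetric] nth_append)
  also have "\<dots> = (\<Sum>zs\<in>LS A t. (\<Prod>k<t. f (zs ! k))) * (\<Sum>a\<in>A. f a)"
    by (simp only: sum_distrib_left[symmetric] sum_distrib_right[symmetric])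
  finally show ?case using Suc by simp
qed

lemma cms_state_snoc: "cms_state d hs (zs @ [z]) = cms_cu_update d hs (cms_state d hs zs) z"
  by (simp add: cms_state_def)

lemma est_le: "f \<in> {1..d} \<Longrightarrow> cms_est d hs c i \<le> c f (hs f i)"
  unfolding cms_est_def by (rule Min_le) auto

lemma est_ge: "d \<ge> 1 \<Longrightarrow> (\<And>f. f \<in> {1..d} \<Longrightarrow> m \<le> c f (hs f i)) \<Longrightarrow> m \<le> cms_est d hs c i"
  unfolding cms_est_def by (subst Min_ge_iff) auto

lemma update_mono: "c r col \<le> cms_cu_update d hs c z r col"
  by (simp add: cms_cu_update_def)

lemma est_update_mono: "d \<ge> 1 \<Longrightarrow> cms_est d hs c i \<le> cms_est d hs (cms_cu_update d hs c z) i"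
  by (rule est_ge) (auto intro: order_trans[OF est_le update_mono])

lemma est_update_self: "d \<ge> 1 \<Longrightarrow> cms_est d hs c z + 1 \<le> cms_est d hs (cms_cu_update d hs c z) z"
  by (rule est_ge) (auto simp: cms_cu_update_def)

lemma count_le_est:
  assumes "d \<ge> 1"
  shows "length (filter (\<lambda>l. l = i) zs) \<le> cms_est d hs (cms_state d hs zs) i"
proof (induction zs rule: rev_induct)
  case Nil
  then show ?case by simp
next
  case (snoc z zs)
  show ?case
  proof (cases "z = i")
    case True
    then show ?thesis using snoc est_update_self[OF assms, of hs "cms_state d hs zs" i]
      by (simp add: cms_state_snoc)
  next
    case False
    then show ?thesis using snoc est_update_mono[OF assms, of hs "cms_state d hs zs" i z]
      by (simp add: cms_state_snoc)
  qed
qed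

lemma counter_le_filter:
  "cms_state d hs zs f col \<le> length (filter (\<lambda>l. hs f l = col) zs)"
proof (induction zs rule: rev_induct)
  case Nil
  then show ?case by (simp add: cms_state_def)
next
  case (snoc z zs)
  let ?c = "cms_state d hs zs"
  show ?case
  proof (cases "f \<in> {1..d} \<and> col = hs f z")
    case True
    have "cms_est d hs ?c z \<le> ?c f (hs f z)" using True by (intro est_le) auto
    then show ?thesis using True snoc
      by (auto simp: cms_state_snoc cms_cu_update_def)
  next
    case False
    then show ?thesis using snoc
      by (auto simp: cms_state_snoc cms_cu_update_def)
  qed
qed

lemma event_imp:
  assumes "d \<ge> 1" "r \<in> {1..d}" "f \<in> {1..d}"
    and "cms_est d hs (cms_state d hs zs) j = cms_state d hs zs r (hs r i)"
  shows "length (filter (\<lambda>l. l = i) zs) \<le> length (filter (\<lambda>l. hs f l = hs f j) zs)"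
proof -
  let ?c = "cms_state d hs zs"
  have "length (filter (\<lambda>l. l = i) zs) \<le> cms_est d hs ?c i" by (rule count_le_est[OF assms(1)])
  also have "\<dots> \<le> ?c r (hs r i)" by (rule est_le[OF assms(2)])
  also have "\<dots> = cms_est d hs ?c j" using assms(4) by simp
  also have "\<dots> \<le> ?c f (hs f j)" by (rule est_le[OF assms(3)])
  also have "\<dots> \<le> length (filter (\<lambda>l. hs f l = hs f j) zs)" by (rule counter_le_filter)
  finally show ?thesis .
qed

lemma prod_phi:
  fixes y :: real
  assumes "\<not> P i" and g: "g = (\<lambda>l. if l = i then 1/y else if P l then y else 1)"
  shows "(\<Prod>k<length zs. g (zs ! k))
     = y ^ length (filter P zs) * (1/y) ^ length (filter (\<lambda>l. l = i) zs)"
proof (induction zs rule: rev_induct)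
  case Nil
  then show ?case by simp
next
  case (snoc z zs)
  have "(\<Prod>k<length (zs @ [z]). g ((zs @ [z]) ! k)) = (\<Prod>k<length zs. g (zs ! k)) * g z"
    using prod_nth_snoc[of g zs z] by simp
  then show ?case
    using snoc assms by (auto simp: field_simps)
qed

lemma conc:
  fixes p :: "nat \<Rightarrow> real"
  assumes A: "finite A" and pos: "\<And>l. l \<in> A \<Longrightarrow> p l \<ge> 0" and sum1: "sum p A = 1"
    and iA: "i \<in> A" and nPi: "\<not> P i" and lt: "sum p {l\<in>A. P l} < p i"
  shows "\<exists>m. 0 < m \<and> m < 1 \<and> (\<forall>t. (\<Sum>zs\<in>LS A t. (\<Prod>k<t. p (zs ! k)) *
     (if length (filter (\<lambda>l. l = i) zs) \<le> length (filter P zs) then 1 else 0)) \<le> m ^ t)"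
proof -
  define pL where "pL = sum p {l\<in>A. P l}"
  have pL0: "pL \<ge> 0" unfolding pL_def by (rule sum_nonneg) (use pos in auto)
  have pi: "p i > pL" using lt pL_def by simp
  have pi1: "p i \<le> 1"
    using sum1 member_le_sum[of i A p] iA pos A by auto
  define y where "y = 2 * p i / (p i + pL)"
  have y1: "y > 1" unfolding y_def using pi pL0 by (simp add: field_simps)
  have ypL: "p i / y > pL" unfolding y_def using pi pL0 by (simp add: field_simps)
  define \<phi> where "\<phi> l = (if l = i then 1/y else if P l then y else 1)" for l
  define m where "m = (\<Sum>l\<in>A. p l * \<phi> l)"
  have "m = (\<Sum>l\<in>A. p l + (if l = i then p i * (1/y - 1) else 0) + (if P l then p l * (y - 1) else 0))"
    unfolding m_def \<phi>_def using nPi by (intro sum.cong refl) (auto simp: algebra_simps)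
  also have "\<dots> = 1 + p i * (1/y - 1) + pL * (y - 1)"
  proof -
    have a: "(\<Sum>l\<in>A. (if l = i then p i * (1/y - 1) else 0)) = p i * (1/y - 1)"
      using A iA by simp
    have b: "(\<Sum>l\<in>A. (if P l then p l * (y - 1) else 0)) = pL * (y - 1)"
      unfolding pL_def using A by (simp add: sum.inter_filter[symmetric] sum_distrib_right)
    show ?thesis using a b sum1 by (simp add: sum.distrib)
  qed
  finally have m_eq: "m = 1 + p i * (1/y - 1) + pL * (y - 1)" .
  have "m - 1 = (y - 1) * (pL - p i / y)" unfolding m_eq using y1 by (simp add: field_simps)
  also have "\<dots> < 0" using y1 ypL by (simp add: mult_pos_neg)
  finally have m1: "m < 1" by simp
  have "m = (1 - p i) + p i / y + pL * (y - 1)" unfolding m_eq using y1 by (simp add: field_simps)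
  moreover have "p i / y > 0" using pi pL0 y1 by simp
  ultimately have m0: "m > 0" using pi1 pL0 y1 by (smt (verit) mult_nonneg_nonneg)
  have "\<forall>t. (\<Sum>zs\<in>LS A t. (\<Prod>k<t. p (zs ! k)) *
     (if length (filter (\<lambda>l. l = i) zs) \<le> length (filter P zs) then 1 else 0)) \<le> m ^ t"
  proof
    fix t
    have "(\<Sum>zs\<in>LS A t. (\<Prod>k<t. p (zs ! k)) *
     (if length (filter (\<lambda>l. l = i) zs) \<le> length (filter P zs) then 1 else 0))
      \<le> (\<Sum>zs\<in>LS A t. \<Prod>k<t. p (zs ! k) * \<phi> (zs ! k))"
    proof (rule sum_mono)
      fix zs assume zs: "zs \<in> LS A t"
      have t: "length zs = t" and sA: "set zs \<subseteq> A" using zs by (auto simp: LS_def)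
      have pp: "(\<Prod>k<t. p (zs ! k)) \<ge> 0"
        using sA t pos by (intro prod_nonneg) (auto simp: subset_iff)
      have ph: "(\<Prod>k<t. \<phi> (zs ! k)) = y ^ length (filter P zs) * (1/y) ^ length (filter (\<lambda>l. l = i) zs)"
        using prod_phi[of P i \<phi> y zs, OF nPi] t by (simp add: \<phi>_def[abs_def])
      have ind: "(if length (filter (\<lambda>l. l = i) zs) \<le> length (filter P zs) then 1 else 0)
          \<le> (\<Prod>k<t. \<phi> (zs ! k))"
      proof (cases "length (filter (\<lambda>l. l = i) zs) \<le> length (filter P zs)")
        case True
        have "y ^ length (filter (\<lambda>l. l = i) zs) \<le> y ^ length (filter P zs)"
          using True y1 by (intro power_increasing) auto
        then show ?thesis using True y1 unfolding ph by (simp add: power_one_over field_simps)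
      next
        case False
        then show ?thesis unfolding ph using y1 by simp
      qed
      show "(\<Prod>k<t. p (zs ! k)) *
     (if length (filter (\<lambda>l. l = i) zs) \<le> length (filter P zs) then 1 else 0)
        \<le> (\<Prod>k<t. p (zs ! k) * \<phi> (zs ! k))"
        using mult_left_mono[OF ind pp] by (simp add: prod.distrib)
    qed
    also have "\<dots> = m ^ t" unfolding m_def by (rule LS_sum_prod[OF A])
    finally show "(\<Sum>zs\<in>LS A t. (\<Prod>k<t. p (zs ! k)) *
     (if length (filter (\<lambda>l. l = i) zs) \<le> length (filter P zs) then 1 else 0)) \<le> m ^ t" .
  qed
  then show ?thesis using m0 m1 by blast
qed

lemma coll_card:
  assumes "pairwise_indep_family N w H" "w \<ge> 1" "l \<in> {1..N}" "j \<in> {1..N}" "l \<noteq> j"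
  shows "real (card {h\<in>H. h l = h j}) = real (card H) / real w"
proof -
  have fin: "finite H" and rng: "\<And>h. h \<in> H \<Longrightarrow> h j \<in> {1..w}"
    using assms(1,4) unfolding pairwise_indep_family_def by auto
  have eq: "{h\<in>H. h l = h j} = (\<Union>a\<in>{1..w}. {h\<in>H. h l = a \<and> h j = a})"
    using rng by auto
  have "card {h\<in>H. h l = h j} = (\<Sum>a\<in>{1..w}. card {h\<in>H. h l = a \<and> h j = a})"
    unfolding eq using fin by (intro card_UN_disjoint) auto
  then have "real (card {h\<in>H. h l = h j}) = (\<Sum>a\<in>{1..w}. real (card {h\<in>H. h l = a \<and> h j = a}))"
    by simp
  also have "\<dots> = (\<Sum>a\<in>{1..w}. real (card H) / (real w)^2)"
    using assms(1,3,4,5) unfolding pairwise_indep_family_def by (intro sum.cong) auto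
  also have "\<dots> = real (card H) / real w" using assms(2) by (simp add: power2_eq_square)
  finally show ?thesis .
qed

lemma q_le_term:
  fixes p :: "nat \<Rightarrow> real"
  assumes pif: "pairwise_indep_family N w H" and w: "w \<ge> 1" and j: "j \<in> {1..N}"
    and pos: "\<And>l. l \<in> {1..N} \<Longrightarrow> p l \<ge> 0" and x: "x > 0" and k: "k < w"
  shows "real (card {h\<in>H. x \<le> (\<Sum>l\<in>{l\<in>{1..N}. l \<noteq> j \<and> h l = h j}. p l)}) / real (card H)
     \<le> (\<Sum>l\<in>{k+1..N}. p l) / (real (w - k) * x) + real k / real w"
proof -
  have fin: "finite H" and Hne: "H \<noteq> {}" using pif unfolding pairwise_indep_family_def by auto
  have cH: "real (card H) > 0" using fin Hne by (simp add: card_gt_0_iff)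
  define S where "S h = (\<Sum>l\<in>{l\<in>{1..N}. l \<noteq> j \<and> h l = h j}. p l)" for h :: "nat \<Rightarrow> nat"
  define T where "T h = (\<Sum>l\<in>{l\<in>{1..N}. k < l \<and> l \<noteq> j \<and> h l = h j}. p l)" for h :: "nat \<Rightarrow> nat"
  define K where "K = {l\<in>{1..N}. l \<le> k \<and> l \<noteq> j}"
  define C where "C = (\<Union>l\<in>K. {h\<in>H. h l = h j})"
  define D where "D = {h\<in>H. x \<le> T h}"
  have sub: "{h\<in>H. x \<le> S h} \<subseteq> C \<union> D"
  proof
    fix h assume h: "h \<in> {h\<in>H. x \<le> S h}"
    show "h \<in> C \<union> D"
    proof (cases "h \<in> C")
      case False
      then have "{l\<in>{1..N}. l \<noteq> j \<and> h l = h j} = {l\<in>{1..N}. k < l \<and> l \<noteq> j \<and> h l = h j}"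
        using h unfolding C_def K_def by (auto; metis not_le)
      then have "S h = T h" unfolding S_def T_def by simp
      then show ?thesis using h unfolding D_def by auto
    qed simp
  qed
  have "C \<subseteq> H" "D \<subseteq> H" unfolding C_def D_def by auto
  then have finC: "finite C" "finite D" using fin finite_subset by auto
  have "real (card {h\<in>H. x \<le> S h}) \<le> real (card (C \<union> D))"
    using card_mono[OF _ sub] finC by simp
  also have "\<dots> \<le> real (card C) + real (card D)"
    using card_Un_le[of C D] by linarith
  finally have c1: "real (card {h\<in>H. x \<le> S h}) \<le> real (card C) + real (card D)" .
  have "card C \<le> (\<Sum>l\<in>K. card {h\<in>H. h l = h j})"
    unfolding C_def by (rule card_UN_le) (simp add: K_def)
  then have "real (card C) \<le> real (\<Sum>l\<in>K. card {h\<in>H. h l = h j})"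
    by (rule of_nat_mono)
  also have "\<dots> = (\<Sum>l\<in>K. real (card {h\<in>H. h l = h j}))"
    by (rule of_nat_sum)
  also have "\<dots> = (\<Sum>l\<in>K. real (card H) / real w)"
    using coll_card[OF pif w _ j] unfolding K_def by (intro sum.cong) auto
  also have "\<dots> = real (card K) * real (card H) / real w" by simp
  also have "\<dots> \<le> real k * real (card H) / real w"
  proof -
    have "K \<subseteq> {1..k}" unfolding K_def by auto
    then have "card K \<le> k" using card_mono[of "{1..k}" K] by simp
    then show ?thesis using w by (intro divide_right_mono mult_right_mono) auto
  qed
  finally have cC: "real (card C) \<le> real k * real (card H) / real w" .
  have Tnn: "T h \<ge> 0" for h unfolding T_def by (rule sum_nonneg) (use pos in auto)
  have "x * real (card D) = (\<Sum>h\<in>D. x)" by simp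
  also have "\<dots> \<le> (\<Sum>h\<in>D. T h)" by (rule sum_mono) (simp add: D_def)
  also have "\<dots> \<le> (\<Sum>h\<in>H. T h)" using fin Tnn by (intro sum_mono2) (auto simp: D_def)
  also have "\<dots> = (\<Sum>h\<in>H. \<Sum>l\<in>{l\<in>{1..N}. k < l \<and> l \<noteq> j}. if h l = h j then p l else 0)"
  proof (rule sum.cong[OF refl])
    fix h :: "nat \<Rightarrow> nat"
    have finF: "finite {l\<in>{1..N}. k < l \<and> l \<noteq> j}" by simp
    have "{l\<in>{1..N}. k < l \<and> l \<noteq> j \<and> h l = h j} = {l\<in>{l\<in>{1..N}. k < l \<and> l \<noteq> j}. h l = h j}" by auto
    then show "T h = (\<Sum>l\<in>{l\<in>{1..N}. k < l \<and> l \<noteq> j}. if h l = h j then p l else 0)"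
      unfolding T_def using sum.inter_filter[OF finF, of p "\<lambda>l. h l = h j"] by simp
  qed
  also have "\<dots> = (\<Sum>l\<in>{l\<in>{1..N}. k < l \<and> l \<noteq> j}. p l * real (card {h\<in>H. h l = h j}))"
    by (subst sum.swap) (simp add: sum.inter_filter[symmetric, OF fin] mult.commute)
  also have "\<dots> = (\<Sum>l\<in>{l\<in>{1..N}. k < l \<and> l \<noteq> j}. p l * (real (card H) / real w))"
    using coll_card[OF pif w _ j] by (intro sum.cong) auto
  also have "\<dots> \<le> (\<Sum>l\<in>{k+1..N}. p l * (real (card H) / real w))"
    using pos by (intro sum_mono2) auto
  also have "\<dots> = (\<Sum>l\<in>{k+1..N}. p l) * (real (card H) / real w)"
    by (rule sum_distrib_right[symmetric])
  finally have cD: "x * real (card D) \<le> (\<Sum>l\<in>{k+1..N}. p l) * (real (card H) / real w)" .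
  define \<Sigma> where "\<Sigma> = (\<Sum>l\<in>{k+1..N}. p l)"
  have \<Sigma>0: "\<Sigma> \<ge> 0" unfolding \<Sigma>_def by (rule sum_nonneg) (use pos in auto)
  have "real (card D) \<le> \<Sigma> * real (card H) / (real w * x)"
    using cD x w unfolding \<Sigma>_def[symmetric] by (simp add: field_simps)
  also have "\<dots> \<le> \<Sigma> * real (card H) / (real (w - k) * x)"
    using k x \<Sigma>0 cH by (intro divide_left_mono mult_right_mono) auto
  finally have cD2: "real (card D) \<le> \<Sigma> * real (card H) / (real (w - k) * x)" .
  have "real (card {h\<in>H. x \<le> S h}) / real (card H) \<le> (real (card C) + real (card D)) / real (card H)"
    using c1 cH by (simp add: divide_right_mono)
  also have "\<dots> \<le> (real k * real (card H) / real w + \<Sigma> * real (card H) / (real (w - k) * x)) / real (card H)"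
    using cC cD2 cH by (intro divide_right_mono) auto
  also have "\<dots> = \<Sigma> / (real (w - k) * x) + real k / real w"
    using cH by (simp add: field_simps)
  finally show ?thesis unfolding S_def \<Sigma>_def .
qed

lemma q_le_A:
  fixes p :: "nat \<Rightarrow> real"
  assumes pif: "pairwise_indep_family N w H" and w: "w \<ge> 1" and j: "j \<in> {1..N}"
    and pos: "\<And>l. l \<in> {1..N} \<Longrightarrow> p l \<ge> 0" and x: "x > 0"
  shows "real (card {h\<in>H. x \<le> (\<Sum>l\<in>{l\<in>{1..N}. l \<noteq> j \<and> h l = h j}. p l)}) / real (card H)
     \<le> cmsA N p w x"
proof -
  have "real (card {h\<in>H. x \<le> (\<Sum>l\<in>{l\<in>{1..N}. l \<noteq> j \<and> h l = h j}. p l)}) / real (card H)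
     \<le> Min ((\<lambda>k. (\<Sum>l\<in>{k+1..N}. p l) / (real (w - k) * x) + real k / real w) ` {0..w-1})"
  proof (subst Min_ge_iff)
    show "finite ((\<lambda>k. (\<Sum>l\<in>{k+1..N}. p l) / (real (w - k) * x) + real k / real w) ` {0..w-1})" by simp
    show "(\<lambda>k. (\<Sum>l\<in>{k+1..N}. p l) / (real (w - k) * x) + real k / real w) ` {0..w-1} \<noteq> {}" by simp
    show "\<forall>a\<in>(\<lambda>k. (\<Sum>l\<in>{k+1..N}. p l) / (real (w - k) * x) + real k / real w) ` {0..w-1}.
      real (card {h\<in>H. x \<le> (\<Sum>l\<in>{l\<in>{1..N}. l \<noteq> j \<and> h l = h j}. p l)}) / real (card H) \<le> a"
    proof
      fix a assume "a \<in> (\<lambda>k. (\<Sum>l\<in>{k+1..N}. p l) / (real (w - k) * x) + real k / real w) ` {0..w-1}"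
      then obtain k where "k \<in> {0..w-1}" and a: "a = (\<Sum>l\<in>{k+1..N}. p l) / (real (w - k) * x) + real k / real w" by blast
      then have "k < w" using w by auto
      from q_le_term[OF pif w j pos x this]
      show "real (card {h\<in>H. x \<le> (\<Sum>l\<in>{l\<in>{1..N}. l \<noteq> j \<and> h l = h j}. p l)}) / real (card H) \<le> a"
        unfolding a .
    qed
  qed
  then show ?thesis unfolding cmsA_def using x by simp
qed

lemma delta_snoc: "cms_delta d hs i j r (zs @ [a]) =
   (a = j \<and> hs r i = hs r j \<and> cms_est d hs (cms_state d hs zs) j = cms_state d hs zs r (hs r i))"
  by (simp add: cms_delta_def Let_def nth_append)

lemma pow_diff_le:
  fixes g q :: real
  assumes "q \<le> g" "g \<le> 1" "0 \<le> q"
  shows "g ^ n - q ^ n \<le> real n * (g - q)"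
proof (induction n)
  case 0 then show ?case by simp
next
  case (Suc n)
  have "g ^ Suc n - q ^ Suc n = g * (g ^ n - q ^ n) + q ^ n * (g - q)" by (simp add: algebra_simps)
  also have "\<dots> \<le> 1 * (real n * (g - q)) + 1 * (g - q)"
  proof (intro add_mono mult_mono)
    show "g ^ n - q ^ n \<ge> 0" using assms by (simp add: power_mono)
    show "q ^ n \<le> 1" using assms by (simp add: power_le_one)
  qed (use assms Suc in auto)
  finally show ?case by (simp add: algebra_simps)
qed

lemma pow_bound:
  fixes g q b :: real
  assumes "0 \<le> g" "g \<le> 1" "0 \<le> q" "q \<le> 1" "0 \<le> b" "g \<le> q + b"
  shows "g ^ n \<le> q ^ n + real n * b"
proof (cases "g \<le> q")
  case True
  then have "g ^ n \<le> q ^ n" using assms by (intro power_mono) auto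
  moreover have "real n * b \<ge> 0" using assms by simp
  ultimately show ?thesis by linarith
next
  case False
  then have "g ^ n - q ^ n \<le> real n * (g - q)" using assms by (intro pow_diff_le) auto
  also have "\<dots> \<le> real n * b" using assms by (intro mult_left_mono) auto
  finally show ?thesis by simp
qed

lemma hash_factor:
  fixes G :: "nat \<Rightarrow> (nat \<Rightarrow> nat) \<Rightarrow> real"
  assumes "finite H"
  shows "(\<Sum>hs\<in>PiE {1..d} (\<lambda>_. H). (1 / real (card H)) ^ d * (\<Prod>f\<in>{1..d}. G f (hs f)))
     = (\<Prod>f\<in>{1..d}. (1 / real (card H)) * (\<Sum>h\<in>H. G f h))"
proof -
  have "(\<Prod>f\<in>{1..d}. (1 / real (card H)) * (\<Sum>h\<in>H. G f h))
      = (\<Prod>f\<in>{1..d}. \<Sum>h\<in>H. (1 / real (card H)) * G f h)"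
    by (simp add: sum_distrib_left)
  also have "\<dots> = (\<Sum>hs\<in>PiE {1..d} (\<lambda>_. H). \<Prod>f\<in>{1..d}. (1 / real (card H)) * G f (hs f))"
    by (rule prod_sum_PiE) (use assms in auto)
  also have "\<dots> = (\<Sum>hs\<in>PiE {1..d} (\<lambda>_. H). (1 / real (card H)) ^ d * (\<Prod>f\<in>{1..d}. G f (hs f)))"
  proof (intro sum.cong refl)
    fix hs
    have "(\<Prod>f\<in>{1..d}. (1 / real (card H)) * G f (hs f)) = (\<Prod>f\<in>{1..d}. (1 / real (card H))) * (\<Prod>f\<in>{1..d}. G f (hs f))"
      by (rule prod.distrib)
    then show "(\<Prod>f\<in>{1..d}. (1 / real (card H)) * G f (hs f)) = (1 / real (card H)) ^ d * (\<Prod>f\<in>{1..d}. G f (hs f))"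
      by simp
  qed
  finally show ?thesis by simp
qed

lemma prod_split_r:
  fixes F :: "nat \<Rightarrow> real"
  assumes "r \<in> {1..d}" "\<And>f. f \<in> {1..d} \<Longrightarrow> f \<noteq> r \<Longrightarrow> F f = c"
  shows "(\<Prod>f\<in>{1..d}. F f) = F r * c ^ (d - 1)"
proof -
  have "(\<Prod>f\<in>{1..d}. F f) = F r * (\<Prod>f\<in>{1..d} - {r}. F f)"
    using assms(1) by (simp add: prod.remove)
  also have "(\<Prod>f\<in>{1..d} - {r}. F f) = (\<Prod>f\<in>{1..d} - {r}. c)"
    using assms(2) by (intro prod.cong) auto
  also have "\<dots> = c ^ (d - 1)" using assms(1) by simp
  finally show ?thesis .
qed

definition Bev :: "nat \<Rightarrow> nat \<Rightarrow> nat list \<Rightarrow> (nat \<Rightarrow> nat) \<Rightarrow> bool" where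
  "Bev i j zs h = (length (filter (\<lambda>l. l = i) zs) \<le> length (filter (\<lambda>l. h l = h j) zs))"

definition gf :: "(nat \<Rightarrow> nat) set \<Rightarrow> nat \<Rightarrow> nat \<Rightarrow> nat list \<Rightarrow> real" where
  "gf H i j zs = (1 / real (card H)) * (\<Sum>h\<in>H. if Bev i j zs h then 1 else 0)"

lemma step1:
  fixes p :: "nat \<Rightarrow> real"
  assumes d: "d \<ge> 1" and w: "w \<ge> 1" and pos: "\<And>l. l \<in> {1..N} \<Longrightarrow> p l \<ge> 0"
    and pif: "pairwise_indep_family N w H"
    and ij: "i \<in> {1..N}" "j \<in> {1..N}" "i \<noteq> j" and r: "r \<in> {1..d}"
  shows "exp_delta N p d H i j r (Suc t)
     \<le> p j / real w * (\<Sum>zs\<in>LS {1..N} t. (\<Prod>k<t. p (zs ! k)) * gf H i j zs ^ (d - 1))"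
proof -
  have finH: "finite H" and Hne: "H \<noteq> {}" using pif unfolding pairwise_indep_family_def by auto
  define c where "c = 1 / real (card H)"
  define P where "P zs = (\<Prod>k<length zs. p (zs ! k))" for zs
  define G where "G zs f h = (if f = r then (if h i = h j then 1 else 0)
       else (if Bev i j zs h then 1 else 0) :: real)" for zs f h
  have Pnn: "P zs \<ge> 0" if "zs \<in> LS {1..N} t" for zs
    using that pos unfolding P_def LS_def by (intro prod_nonneg) (auto simp: subset_iff)
  have Gnn: "G zs f h \<ge> 0" for zs f h unfolding G_def by auto
  have inner: "(\<Sum>zs\<in>{zs. set zs \<subseteq> {1..N} \<and> length zs = Suc t}.
           (\<Prod>k<Suc t. p (zs ! k)) * (if cms_delta d hs i j r zs then 1 else 0))
     \<le> (\<Sum>zs\<in>LS {1..N} t. P zs * p j * (\<Prod>f\<in>{1..d}. G zs f (hs f)))" for hs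
  proof -
    have "(\<Sum>zs\<in>{zs. set zs \<subseteq> {1..N} \<and> length zs = Suc t}.
           (\<Prod>k<Suc t. p (zs ! k)) * (if cms_delta d hs i j r zs then 1 else 0))
       = (\<Sum>zs\<in>LS {1..N} t. \<Sum>a\<in>{1..N}. (\<Prod>k<Suc t. p ((zs @ [a]) ! k)) *
            (if cms_delta d hs i j r (zs @ [a]) then 1 else 0))"
      using LS_sum_Suc[of "{1..N}" "\<lambda>zs. (\<Prod>k<Suc t. p (zs ! k)) * (if cms_delta d hs i j r zs then 1 else 0)" t]
      by (simp add: LS_def)
    also have "\<dots> \<le> (\<Sum>zs\<in>LS {1..N} t. P zs * p j * (\<Prod>f\<in>{1..d}. G zs f (hs f)))"
    proof (rule sum_mono)
      fix zs assume zs: "zs \<in> LS {1..N} t"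
      then have lz: "length zs = t" by (simp add: LS_def)
      define E where "E = (hs r i = hs r j \<and> cms_est d hs (cms_state d hs zs) j = cms_state d hs zs r (hs r i))"
      have "(\<Sum>a\<in>{1..N}. (\<Prod>k<Suc t. p ((zs @ [a]) ! k)) *
            (if cms_delta d hs i j r (zs @ [a]) then 1 else 0))
          = (\<Sum>a\<in>{1..N}. if a = j then P zs * p j * (if E then 1 else 0) else 0)"
      proof (intro sum.cong refl)
        fix a
        have "(\<Prod>k<Suc t. p ((zs @ [a]) ! k)) = P zs * p a"
          using prod_nth_snoc[of p zs a] lz by (simp add: P_def)
        then show "(\<Prod>k<Suc t. p ((zs @ [a]) ! k)) * (if cms_delta d hs i j r (zs @ [a]) then 1 else 0)
           = (if a = j then P zs * p j * (if E then 1 else 0) else 0)"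
          by (simp add: delta_snoc E_def)
      qed
      also have "\<dots> = P zs * p j * (if E then 1 else 0)" using ij(2) by simp
      also have "\<dots> \<le> P zs * p j * (\<Prod>f\<in>{1..d}. G zs f (hs f))"
      proof (rule mult_left_mono)
        show "0 \<le> P zs * p j" using Pnn[OF zs] pos[OF ij(2)] by simp
        show "(if E then 1 else 0) \<le> (\<Prod>f\<in>{1..d}. G zs f (hs f))"
        proof (cases E)
          case True
          have "G zs f (hs f) = 1" if "f \<in> {1..d}" for f
          proof (cases "f = r")
            case True then show ?thesis using \<open>E\<close> unfolding G_def E_def by simp
          next
            case False
            have "Bev i j zs (hs f)"
              unfolding Bev_def using event_imp[OF d r that] \<open>E\<close> unfolding E_def by blast
            then show ?thesis using False unfolding G_def by simp
          qed
          then show ?thesis using True by simp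
        next
          case False
          then show ?thesis using Gnn by (simp add: prod_nonneg)
        qed
      qed
      finally show "(\<Sum>a\<in>{1..N}. (\<Prod>k<Suc t. p ((zs @ [a]) ! k)) *
            (if cms_delta d hs i j r (zs @ [a]) then 1 else 0))
          \<le> P zs * p j * (\<Prod>f\<in>{1..d}. G zs f (hs f))" .
    qed
    finally show ?thesis .
  qed
  have hf: "(\<Sum>hs\<in>PiE {1..d} (\<lambda>_. H). c ^ d * (\<Prod>f\<in>{1..d}. G zs f (hs f)))
      = 1 / real w * gf H i j zs ^ (d - 1)" for zs
  proof -
    have "(\<Sum>hs\<in>PiE {1..d} (\<lambda>_. H). c ^ d * (\<Prod>f\<in>{1..d}. G zs f (hs f)))
       = (\<Prod>f\<in>{1..d}. c * (\<Sum>h\<in>H. G zs f h))"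
      unfolding c_def by (rule hash_factor[OF finH])
    also have "\<dots> = c * (\<Sum>h\<in>H. G zs r h) * gf H i j zs ^ (d - 1)"
      by (rule prod_split_r[OF r]) (simp add: G_def gf_def c_def)
    also have "c * (\<Sum>h\<in>H. G zs r h) = 1 / real w"
    proof -
      have "(\<Sum>h\<in>H. G zs r h) = (\<Sum>h\<in>H. if h i = h j then 1 else 0)"
        unfolding G_def by simp
      also have "\<dots> = real (card {h\<in>H. h i = h j})"
        using sum.inter_filter[OF finH, of "\<lambda>_. (1::real)" "\<lambda>h. h i = h j"] by simp
      also have "\<dots> = real (card H) / real w" by (rule coll_card[OF pif w ij])
      finally show ?thesis unfolding c_def using finH Hne by (simp add: card_gt_0_iff)
    qed
    finally show ?thesis .
  qed
  have "exp_delta N p d H i j r (Suc t)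
      \<le> (\<Sum>hs\<in>PiE {1..d} (\<lambda>_. H). c ^ d * (\<Sum>zs\<in>LS {1..N} t. P zs * p j * (\<Prod>f\<in>{1..d}. G zs f (hs f))))"
    unfolding exp_delta_def c_def[symmetric]
    by (intro sum_mono mult_left_mono inner) (simp add: c_def)
  also have "\<dots> = (\<Sum>zs\<in>LS {1..N} t. P zs * p j * (\<Sum>hs\<in>PiE {1..d} (\<lambda>_. H). c ^ d * (\<Prod>f\<in>{1..d}. G zs f (hs f))))"
  proof -
    have "(\<Sum>hs\<in>PiE {1..d} (\<lambda>_. H). c ^ d * (\<Sum>zs\<in>LS {1..N} t. P zs * p j * (\<Prod>f\<in>{1..d}. G zs f (hs f))))
       = (\<Sum>hs\<in>PiE {1..d} (\<lambda>_. H). \<Sum>zs\<in>LS {1..N} t. P zs * p j * (c ^ d * (\<Prod>f\<in>{1..d}. G zs f (hs f))))"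
      by (simp add: sum_distrib_left mult_ac)
    also have "\<dots> = (\<Sum>zs\<in>LS {1..N} t. \<Sum>hs\<in>PiE {1..d} (\<lambda>_. H). P zs * p j * (c ^ d * (\<Prod>f\<in>{1..d}. G zs f (hs f))))"
      by (rule sum.swap)
    also have "\<dots> = (\<Sum>zs\<in>LS {1..N} t. P zs * p j * (\<Sum>hs\<in>PiE {1..d} (\<lambda>_. H). c ^ d * (\<Prod>f\<in>{1..d}. G zs f (hs f))))"
      by (simp add: sum_distrib_left)
    finally show ?thesis .
  qed
  also have "\<dots> = (\<Sum>zs\<in>LS {1..N} t. P zs * p j * (1 / real w * gf H i j zs ^ (d - 1)))"
    unfolding hf by (rule refl)
  also have "\<dots> = p j / real w * (\<Sum>zs\<in>LS {1..N} t. P zs * gf H i j zs ^ (d - 1))"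
    by (simp add: sum_distrib_left mult_ac)
  also have "\<dots> = p j / real w * (\<Sum>zs\<in>LS {1..N} t. (\<Prod>k<t. p (zs ! k)) * gf H i j zs ^ (d - 1))"
    by (intro arg_cong[where f = "\<lambda>x. p j / real w * x"] sum.cong refl) (simp add: P_def LS_def)
  finally show ?thesis .
qed

theorem lemma1:
  fixes N d w :: nat and p :: "nat \<Rightarrow> real" and H :: "(nat \<Rightarrow> nat) set" and i j :: nat
  assumes "N \<ge> 1" "d \<ge> 1" "w \<ge> 1"
    and "\<And>l. l \<in> {1..N} \<Longrightarrow> p l \<ge> 0"
    and "(\<Sum>l\<in>{1..N}. p l) = 1"
    and "\<And>l m. l \<in> {1..N} \<Longrightarrow> m \<in> {1..N} \<Longrightarrow> l \<le> m \<Longrightarrow> p m \<le> p l"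
    and "pairwise_indep_family N w H"
    and "i \<in> {1..N}" "j \<in> {1..N}" "i \<noteq> j"
  shows "\<exists>\<alpha>>0. \<exists>\<beta>\<ge>0. \<forall>r\<in>{1..d}. \<forall>s\<ge>1.
           exp_delta N p d H i j r s
             \<le> p j / real w * (cms_gamma N p d w i j + \<beta> * exp (- \<alpha> * real (s - 1)))"
proof -
  note d = assms(2) and w = assms(3) and pos = assms(4) and sum1 = assms(5) and mono = assms(6)
    and pif = assms(7) and ij = assms(8-10)
  have finH: "finite H" and Hne: "H \<noteq> {}" using pif unfolding pairwise_indep_family_def by auto
  have cH: "real (card H) > 0" using finH Hne by (simp add: card_gt_0_iff)
  define x where "x = p i - p j"
  define S where "S h = (\<Sum>l\<in>{l\<in>{1..N}. l \<noteq> j \<and> h l = h j}. p l)" for h :: "nat \<Rightarrow> nat"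
  define Hg where "Hg = {h\<in>H. x \<le> S h}"
  define Hb where "Hb = {h\<in>H. \<not> x \<le> S h}"
  define q where "q = real (card Hg) / real (card H)"
  define n where "n = d - 1"
  define P where "P zs = (\<Prod>k<length zs. p (zs ! k))" for zs
  define ind where "ind zs h = (if Bev i j zs h then 1 else 0 :: real)" for zs h
  have finHb: "finite Hb" "finite Hg" using finH unfolding Hb_def Hg_def by auto
  have Snn: "S h \<ge> 0" for h unfolding S_def by (rule sum_nonneg) (use pos in auto)
  have "\<forall>h\<in>Hb. \<exists>m. 0 < m \<and> m < 1 \<and> (\<forall>t. (\<Sum>zs\<in>LS {1..N} t. (\<Prod>k<t. p (zs ! k)) *
     (if length (filter (\<lambda>l. l = i) zs) \<le> length (filter (\<lambda>l. h l = h j) zs) then 1 else 0)) \<le> m ^ t)"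
  proof
    fix h assume h: "h \<in> Hb"
    then have Sx: "S h < x" unfolding Hb_def by auto
    have nPi: "\<not> h i = h j"
    proof
      assume "h i = h j"
      then have "i \<in> {l\<in>{1..N}. l \<noteq> j \<and> h l = h j}" using ij by auto
      then have "p i \<le> S h" unfolding S_def by (intro member_le_sum) (use pos in auto)
      then show False using Sx pos[OF ij(2)] unfolding x_def by simp
    qed
    have "{l\<in>{1..N}. h l = h j} = insert j {l\<in>{1..N}. l \<noteq> j \<and> h l = h j}" using ij by auto
    then have "sum p {l\<in>{1..N}. h l = h j} = p j + S h" unfolding S_def by simp
    then have lt: "sum p {l\<in>{1..N}. h l = h j} < p i" using Sx unfolding x_def by simp
    show "\<exists>m. 0 < m \<and> m < 1 \<and> (\<forall>t. (\<Sum>zs\<in>LS {1..N} t. (\<Prod>k<t. p (zs ! k)) *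
     (if length (filter (\<lambda>l. l = i) zs) \<le> length (filter (\<lambda>l. h l = h j) zs) then 1 else 0)) \<le> m ^ t)"
      by (rule conc[OF _ pos sum1 ij(1) _ lt]) (use nPi in auto)
  qed
  then have "\<exists>mf. \<forall>h\<in>Hb. 0 < mf h \<and> mf h < 1 \<and> (\<forall>t. (\<Sum>zs\<in>LS {1..N} t. (\<Prod>k<t. p (zs ! k)) *
     (if length (filter (\<lambda>l. l = i) zs) \<le> length (filter (\<lambda>l. h l = h j) zs) then 1 else 0)) \<le> mf h ^ t)"
    by (rule bchoice)
  then obtain mf where mf0: "\<forall>h\<in>Hb. 0 < mf h \<and> mf h < 1 \<and> (\<forall>t. (\<Sum>zs\<in>LS {1..N} t. (\<Prod>k<t. p (zs ! k)) *
     (if length (filter (\<lambda>l. l = i) zs) \<le> length (filter (\<lambda>l. h l = h j) zs) then 1 else 0)) \<le> mf h ^ t)"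
    by (rule exE)
  note mf = bspec[OF mf0]
  define M where "M = Max (insert (1/2) (mf ` Hb))"
  have "1/2 \<le> M" unfolding M_def using finHb by (intro Max_ge) auto
  then have M0: "M > 0" by simp
  have M1: "M < 1" unfolding M_def using finHb mf by (auto simp: Max_less_iff)
  have mfM: "mf h \<le> M" if "h \<in> Hb" for h unfolding M_def using finHb that by (intro Max_ge) auto
  define \<alpha> where "\<alpha> = - ln M"
  have \<alpha>: "\<alpha> > 0" unfolding \<alpha>_def using M0 M1 by simp
  have expM: "exp (- \<alpha> * real t) = M ^ t" for t
  proof -
    have "exp (- \<alpha> * real t) = exp (real t * ln M)" unfolding \<alpha>_def by (simp add: mult.commute)
    also have "\<dots> = exp (ln M) ^ t" by (rule exp_of_nat_mult)
    also have "\<dots> = M ^ t" using M0 by simp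
    finally show ?thesis .
  qed
  have q0: "q \<ge> 0" and q1: "q \<le> 1"
    unfolding q_def using cH card_mono[OF finH, of Hg] by (auto simp: Hg_def)
  have qgam: "q ^ n \<le> cms_gamma N p d w i j"
  proof (cases "j \<le> i")
    case True
    then show ?thesis unfolding cms_gamma_def using q0 q1 by (simp add: power_le_one)
  next
    case False
    then have x0: "x \<ge> 0" unfolding x_def using mono[OF ij(1) ij(2)] by simp
    show ?thesis
    proof (cases "x = 0")
      case True
      then show ?thesis using False q0 q1 unfolding cms_gamma_def cmsA_def x_def
        by (simp add: power_le_one)
    next
      case False2: False
      then have xp: "x > 0" using x0 by simp
      have "q \<le> cmsA N p w x" unfolding q_def Hg_def S_def by (rule q_le_A[OF pif w ij(2) pos xp])
      then have "q ^ n \<le> cmsA N p w x ^ n" using q0 by (intro power_mono) auto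
      moreover have "q ^ n \<le> 1" using q0 q1 by (simp add: power_le_one)
      ultimately show ?thesis using False unfolding cms_gamma_def x_def n_def by simp
    qed
  qed
  have main: "(\<Sum>zs\<in>LS {1..N} t. (\<Prod>k<t. p (zs ! k)) * gf H i j zs ^ (d - 1))
      \<le> q ^ n + real n * M ^ t" for t
  proof -
    define b where "b zs = (1 / real (card H)) * (\<Sum>h\<in>Hb. ind zs h)" for zs
    have Pnn: "P zs \<ge> 0" if "zs \<in> LS {1..N} t" for zs
      using that pos unfolding P_def LS_def by (intro prod_nonneg) (auto simp: subset_iff)
    have ind01: "0 \<le> ind zs h" "ind zs h \<le> 1" for zs h unfolding ind_def by auto
    have gsplit: "gf H i j zs = (1 / real (card H)) * (\<Sum>h\<in>Hg. ind zs h) + b zs" for zs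
    proof -
      have "H = Hg \<union> Hb" "Hg \<inter> Hb = {}" unfolding Hg_def Hb_def by auto
      then have "(\<Sum>h\<in>H. ind zs h) = (\<Sum>h\<in>Hg. ind zs h) + (\<Sum>h\<in>Hb. ind zs h)"
        using finHb by (metis sum.union_disjoint)
      then show ?thesis unfolding gf_def b_def ind_def by (simp add: algebra_simps)
    qed
    have g_le: "gf H i j zs \<le> q + b zs" for zs
    proof -
      have "(\<Sum>h\<in>Hg. ind zs h) \<le> (\<Sum>h\<in>Hg. 1)" using ind01 by (intro sum_mono) auto
      then have "(1 / real (card H)) * (\<Sum>h\<in>Hg. ind zs h) \<le> q"
        unfolding q_def using cH by (simp add: divide_right_mono)
      then show ?thesis using gsplit[of zs] by simp
    qed
    have g0: "gf H i j zs \<ge> 0" for zs unfolding gf_def using cH by (simp add: sum_nonneg)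
    have g1: "gf H i j zs \<le> 1" for zs
    proof -
      have "(\<Sum>h\<in>H. if Bev i j zs h then 1 else 0) \<le> (\<Sum>h\<in>H. (1::real))" by (intro sum_mono) auto
      then show ?thesis unfolding gf_def using cH by (simp add: field_simps)
    qed
    have b0: "b zs \<ge> 0" for zs unfolding b_def using cH ind01 by (simp add: sum_nonneg)
    have "(\<Sum>zs\<in>LS {1..N} t. (\<Prod>k<t. p (zs ! k)) * gf H i j zs ^ (d - 1))
        = (\<Sum>zs\<in>LS {1..N} t. P zs * gf H i j zs ^ n)"
      by (intro sum.cong refl) (simp add: P_def LS_def n_def)
    also have "\<dots> \<le> (\<Sum>zs\<in>LS {1..N} t. P zs * (q ^ n + real n * b zs))"
      by (intro sum_mono mult_left_mono pow_bound Pnn g0 g1 q0 q1 b0 g_le)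
    also have "\<dots> = q ^ n * (\<Sum>zs\<in>LS {1..N} t. P zs) + real n * (\<Sum>zs\<in>LS {1..N} t. P zs * b zs)"
      by (simp add: algebra_simps sum.distrib sum_distrib_left)
    also have "(\<Sum>zs\<in>LS {1..N} t. P zs) = 1"
    proof -
      have "(\<Sum>zs\<in>LS {1..N} t. P zs) = (\<Sum>zs\<in>LS {1..N} t. \<Prod>k<t. p (zs ! k))"
        by (intro sum.cong refl) (simp add: P_def LS_def)
      also have "\<dots> = 1" using LS_sum_prod[of "{1..N}" p t] sum1 by simp
      finally show ?thesis .
    qed
    finally have calc1: "(\<Sum>zs\<in>LS {1..N} t. (\<Prod>k<t. p (zs ! k)) * gf H i j zs ^ (d - 1))
       \<le> q ^ n * 1 + real n * (\<Sum>zs\<in>LS {1..N} t. P zs * b zs)" .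
    have calc2: "(\<Sum>zs\<in>LS {1..N} t. P zs * b zs) \<le> M ^ t"
    proof -
      have "(\<Sum>zs\<in>LS {1..N} t. P zs * b zs)
          = (1 / real (card H)) * (\<Sum>h\<in>Hb. \<Sum>zs\<in>LS {1..N} t. P zs * ind zs h)"
        unfolding b_def by (subst sum.swap) (simp add: sum_distrib_left sum_divide_distrib mult_ac)
      also have "\<dots> \<le> (1 / real (card H)) * (\<Sum>h\<in>Hb. M ^ t)"
      proof (intro mult_left_mono sum_mono)
        fix h assume h: "h \<in> Hb"
        have "(\<Sum>zs\<in>LS {1..N} t. P zs * ind zs h) = (\<Sum>zs\<in>LS {1..N} t. (\<Prod>k<t. p (zs ! k)) *
           (if length (filter (\<lambda>l. l = i) zs) \<le> length (filter (\<lambda>l. h l = h j) zs) then 1 else 0))"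
          by (intro sum.cong refl) (simp add: P_def LS_def ind_def Bev_def)
        also have "\<dots> \<le> mf h ^ t" using mf[OF h] by blast
        also have "\<dots> \<le> M ^ t" using mf[OF h] mfM[OF h] by (intro power_mono) auto
        finally show "(\<Sum>zs\<in>LS {1..N} t. P zs * ind zs h) \<le> M ^ t" .
      qed (use cH in simp)
      also have "\<dots> = real (card Hb) / real (card H) * M ^ t" by simp
      also have "\<dots> \<le> 1 * M ^ t"
      proof (intro mult_right_mono)
        have "card Hb \<le> card H" using card_mono[OF finH, of Hb] by (auto simp: Hb_def)
        then show "real (card Hb) / real (card H) \<le> 1" using cH by simp
      qed (use M0 in simp)
      finally show ?thesis by simp
    qed
    show ?thesis
      using calc1 mult_left_mono[OF calc2, of "real n"] by simp
  qed
  show ?thesis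
  proof (intro exI conjI allI ballI impI)
    show "\<alpha> > 0" by (rule \<alpha>)
    show "real n \<ge> 0" by simp
    fix r s assume r: "r \<in> {1..d}" and s: "(1::nat) \<le> s"
    then obtain t where st: "s = Suc t" by (cases s) auto
    have "exp_delta N p d H i j r s
        \<le> p j / real w * (\<Sum>zs\<in>LS {1..N} t. (\<Prod>k<t. p (zs ! k)) * gf H i j zs ^ (d - 1))"
      unfolding st by (rule step1[OF d w pos pif ij r])
    also have "\<dots> \<le> p j / real w * (cms_gamma N p d w i j + real n * exp (- \<alpha> * real (s - 1)))"
    proof (rule mult_left_mono)
      show "0 \<le> p j / real w" using pos[OF ij(2)] by simp
      show "(\<Sum>zs\<in>LS {1..N} t. (\<Prod>k<t. p (zs ! k)) * gf H i j zs ^ (d - 1))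
          \<le> cms_gamma N p d w i j + real n * exp (- \<alpha> * real (s - 1))"
        using main[of t] qgam unfolding expM st by simp
    qed
    finally show "exp_delta N p d H i j r s
        \<le> p j / real w * (cms_gamma N p d w i j + real n * exp (- \<alpha> * real (s - 1)))" .
  qed
qed

end
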